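(* Fix $T>0$, $C_0>0$ and $\gamma>0$, and suppose (A3), (A4) hold. On the event $\{\|\mathbf X\|_{op}\le C_0\}$ there is a constant $C>0$, depending on $T$, $C_0$ (and on $\beta,\delta$ and the constants in (A3)–(A4)) but not on $\gamma$ or on $n,d$, such that for every realization of the noise, $$\max_{0\le s\le t\le T/\gamma}\max_{j\in[d]}\Big[\big\|\partial_\varepsilon|_{\varepsilon=0}\boldsymbol\theta^{t,(s,j),\varepsilon}\big\|+\sqrt d\,\big\|\partial_\varepsilon|_{\varepsilon=0}\widehat\alpha^{t,(s,j),\varepsilon}\big\|\Big]\le C\gamma,$$ $$\max_{0\le s\le t\le T/\gamma}\max_{i\in[n]}\Big[\big\|\partial_\varepsilon|_{\varepsilon=0}\boldsymbol\theta^{t,[s,i],\varepsilon}\big\|+\sqrt d\,\big\|\partial_\varepsilon|_{\varepsilon=0}\widehat\alpha^{t,[s,i],\varepsilon}\big\|\Big]\le C\gamma,$$ where $s,t$ range over integers.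
   Context: (A3) $s:\mathbb R\times\mathbb R^K\to\mathbb R$ is $C^2$ with $|s(\theta,\alpha)|\le C(1+|\theta|+\|\alpha\|)$ and $\|\nabla_{(\theta,\alpha)}s\|_2,\|\nabla^2_{(\theta,\alpha)}s\|_{op}\le C$. (A4) $\mathcal G:\mathbb R^K\times\mathcal P_2(\mathbb R)\to\mathbb R^K$ satisfies $\|\mathcal G(\alpha,\mathsf P)\|\le C(1+\|\alpha\|+(\mathbb E_{\mathsf P}\theta^2)^{1/2})$, $\|\mathcal G(\alpha,\mathsf P)-\mathcal G(\alpha',\mathsf P')\|\le C(\|\alpha-\alpha'\|+W_2(\mathsf P,\mathsf P'))$, and with $\widehat{\mathsf P}(\boldsymbol\theta)=\frac1d\sum_j\delta_{\theta_j}$ each $(\boldsymbol\theta,\alpha)\mapsto\mathcal G_k(\alpha,\widehat{\mathsf P}(\boldsymbol\theta))$ is $C^2$ with $\|\nabla_\alpha\mathcal G_k\|\le C$, $\sqrt d\|\nabla_{\boldsymbol\theta}\mathcal G_k\|\le C$, $d\|\nabla^2_{\boldsymbol\theta}\mathcal G_k\|_{op}\le C$, $\sqrt d\|\nabla_{\boldsymbol\theta}\nabla_\alpha\mathcal G_k\|_{op}\le C$, $\|\nabla^2_\alpha\mathcal G_k\|_{op}\le C$, with $C$ independent of $d$. Here $\mathbf X\in\mathbb R^{n\times d}$, $\mathbf y\in\mathbb R^n$, $\beta\in\mathbb R$, with $n/d$ bounded. Perturbed discrete dynamics. For integer $s\ge0$, $j\in[d]$, $\varepsilon\in\mathbb R$: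 $\boldsymbol\theta^{t+1,(s,j),\varepsilon}=\boldsymbol\theta^{t,(s,j),\varepsilon}-\gamma[\beta\mathbf X^\top(\mathbf X\boldsymbol\theta^{t,(s,j),\varepsilon}-\mathbf y)-(s(\theta^{t,(s,j),\varepsilon}_k,\widehat\alpha^{t,(s,j),\varepsilon}))_k-\varepsilon\mathbf e_j\mathbf 1_{t=s}]+\sqrt2(\mathbf b^{t+1}-\mathbf b^t)$, $\widehat\alpha^{t+1,(s,j),\varepsilon}=\widehat\alpha^{t,(s,j),\varepsilon}+\gamma\mathcal G(\widehat\alpha^{t,(s,j),\varepsilon},\widehat{\mathsf P}(\boldsymbol\theta^{t,(s,j),\varepsilon}))$. For $i\in[n]$, $(\boldsymbol\theta^{t,[s,i],\varepsilon},\widehat\alpha^{t,[s,i],\varepsilon})$ is defined identically with $\varepsilon\mathbf e_j$ replaced by $\varepsilon\mathbf X^\top\mathbf e_i$. All start from the same initial condition $(\boldsymbol\theta^0,\widehat\alpha^0)$ and use the same noise $\mathbf b^t$ (with $\mathbf b^0=0$ and increments $\mathcal N(0,\gamma\mathbf I_d)$). Here $\mathbf e_j$ denotes the $j$-th standard basis vector. *)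

theory Defs
  imports "HOL-Probability.Probability"
begin

text \<open>Vectors of R^m are represented as functions nat => real whose coordinates
  outside {..<m} are zero; Euclidean norms are L2_set v {..<m}.\<close>

definition dvec :: "nat \<Rightarrow> (nat \<Rightarrow> real) set" where
  "dvec m = {v. \<forall>j\<ge>m. v j = 0}"

definition opn :: "nat set \<Rightarrow> nat set \<Rightarrow> (nat \<Rightarrow> nat \<Rightarrow> real) \<Rightarrow> real" where
  "opn R S A = Sup {L2_set (\<lambda>i. \<Sum>j\<in>S. A i j * v j) R | v. L2_set v S \<le> 1}"

definition C2_on :: "nat \<Rightarrow> ((nat \<Rightarrow> real) \<Rightarrow> real) \<Rightarrow> ((nat \<Rightarrow> real) \<Rightarrow> nat \<Rightarrow> real)
    \<Rightarrow> ((nat \<Rightarrow> real) \<Rightarrow> nat \<Rightarrow> nat \<Rightarrow> real) \<Rightarrow> bool" where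
  "C2_on m f Df D2f \<longleftrightarrow>
    (\<forall>x\<in>dvec m. \<forall>e>0. \<exists>r>0. \<forall>h\<in>dvec m. L2_set h {..<m} < r \<longrightarrow>
        \<bar>f (\<lambda>j. x j + h j) - f x - (\<Sum>j<m. Df x j * h j)\<bar> \<le> e * L2_set h {..<m}) \<and>
    (\<forall>x\<in>dvec m. \<forall>e>0. \<exists>r>0. \<forall>h\<in>dvec m. L2_set h {..<m} < r \<longrightarrow>
        L2_set (\<lambda>i. Df (\<lambda>j. x j + h j) i - Df x i - (\<Sum>j<m. D2f x i j * h j)) {..<m}
          \<le> e * L2_set h {..<m}) \<and>
    (\<forall>x\<in>dvec m. \<forall>e>0. \<exists>r>0. \<forall>h\<in>dvec m. L2_set h {..<m} < r \<longrightarrow>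
        opn {..<m} {..<m} (\<lambda>i j. D2f (\<lambda>j. x j + h j) i j - D2f x i j) \<le> e)"

definition P2 :: "real measure set" where
  "P2 = {P. prob_space P \<and> sets P = sets borel \<and> integrable P (\<lambda>x. x ^ 2)}"

definition couplings :: "real measure \<Rightarrow> real measure \<Rightarrow> (real \<times> real) measure set" where
  "couplings P Q = {\<pi>. prob_space \<pi> \<and> sets \<pi> = sets (borel \<Otimes>\<^sub>M borel) \<and>
      distr \<pi> borel fst = P \<and> distr \<pi> borel snd = Q}"

definition W2 :: "real measure \<Rightarrow> real measure \<Rightarrow> real" where
  "W2 P Q = sqrt (enn2real (INF \<pi>\<in>couplings P Q. \<integral>\<^sup>+ z. ennreal ((fst z - snd z) ^ 2) \<partial>\<pi>))"

definition emp :: "nat \<Rightarrow> (nat \<Rightarrow> real) \<Rightarrow> real measure" where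
  "emp d \<theta> = distr (uniform_count_measure {..<d}) borel \<theta>"

text \<open>Assumption (A3) with constant CA, K = dimension of alpha.
  The joint variable z in R^(1+K) has z 0 = theta, z (Suc k) = alpha_k.\<close>
definition A3 :: "nat \<Rightarrow> real \<Rightarrow> (real \<Rightarrow> (nat \<Rightarrow> real) \<Rightarrow> real) \<Rightarrow> bool" where
  "A3 K CA s \<longleftrightarrow>
    (\<forall>\<theta> \<alpha>. \<alpha> \<in> dvec K \<longrightarrow> \<bar>s \<theta> \<alpha>\<bar> \<le> CA * (1 + \<bar>\<theta>\<bar> + L2_set \<alpha> {..<K})) \<and>
    (\<exists>Ds D2s. C2_on (Suc K) (\<lambda>z. s (z 0) (\<lambda>k. if k < K then z (Suc k) else 0)) Ds D2s \<and>
       (\<forall>z\<in>dvec (Suc K). L2_set (Ds z) {..<Suc K} \<le> CA \<and>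
          opn {..<Suc K} {..<Suc K} (D2s z) \<le> CA))"

text \<open>Assumption (A4) with constant CA.  For dimension d the joint variable
  z in R^(d+K) has z j = theta_j (j<d) and z (d+k) = alpha_k (k<K).\<close>
definition A4 :: "nat \<Rightarrow> real \<Rightarrow> ((nat \<Rightarrow> real) \<Rightarrow> real measure \<Rightarrow> (nat \<Rightarrow> real)) \<Rightarrow> bool" where
  "A4 K CA G \<longleftrightarrow>
    (\<forall>\<alpha>\<in>dvec K. \<forall>P\<in>P2.
        L2_set (G \<alpha> P) {..<K} \<le> CA * (1 + L2_set \<alpha> {..<K} + sqrt (\<integral>x. x ^ 2 \<partial>P))) \<and>
    (\<forall>\<alpha>\<in>dvec K. \<forall>\<alpha>'\<in>dvec K. \<forall>P\<in>P2. \<forall>P'\<in>P2.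
        L2_set (\<lambda>k. G \<alpha> P k - G \<alpha>' P' k) {..<K}
          \<le> CA * (L2_set (\<lambda>k. \<alpha> k - \<alpha>' k) {..<K} + W2 P P')) \<and>
    (\<forall>d>0. \<forall>k<K. \<exists>DG D2G.
        C2_on (d + K) (\<lambda>z. G (\<lambda>k'. if k' < K then z (d + k') else 0)
                            (emp d (\<lambda>j. if j < d then z j else 0)) k) DG D2G \<and>
        (\<forall>z\<in>dvec (d + K).
           L2_set (DG z) {d..<d+K} \<le> CA \<and>
           sqrt (real d) * L2_set (DG z) {..<d} \<le> CA \<and>
           real d * opn {..<d} {..<d} (D2G z) \<le> CA \<and>
           sqrt (real d) * opn {..<d} {d..<d+K} (D2G z) \<le> CA \<and>
           opn {d..<d+K} {d..<d+K} (D2G z) \<le> CA))"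

text \<open>Perturbed discrete dynamics: perturbation eps * v added inside the bracket at
  step t = s0.  v = e_j gives the (s,j) dynamics, v = X^T e_i gives the [s,i] dynamics.
  Returns (theta^t, alpha^t).\<close>
fun dyn :: "nat \<Rightarrow> (real \<Rightarrow> (nat \<Rightarrow> real) \<Rightarrow> real) \<Rightarrow> ((nat \<Rightarrow> real) \<Rightarrow> real measure \<Rightarrow> (nat \<Rightarrow> real))
    \<Rightarrow> real \<Rightarrow> real \<Rightarrow> nat \<Rightarrow> nat \<Rightarrow> (nat \<Rightarrow> nat \<Rightarrow> real) \<Rightarrow> (nat \<Rightarrow> real)
    \<Rightarrow> (nat \<Rightarrow> real) \<Rightarrow> (nat \<Rightarrow> real) \<Rightarrow> (nat \<Rightarrow> nat \<Rightarrow> real)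
    \<Rightarrow> (nat \<Rightarrow> real) \<Rightarrow> nat \<Rightarrow> real \<Rightarrow> nat \<Rightarrow> (nat \<Rightarrow> real) \<times> (nat \<Rightarrow> real)" where
  "dyn K s G \<beta> \<gamma> d n X y \<theta>0 \<alpha>0 b v s0 \<epsilon> 0 = (\<theta>0, \<alpha>0)"
| "dyn K s G \<beta> \<gamma> d n X y \<theta>0 \<alpha>0 b v s0 \<epsilon> (Suc t) =
    (let (\<theta>, \<alpha>) = dyn K s G \<beta> \<gamma> d n X y \<theta>0 \<alpha>0 b v s0 \<epsilon> t in
     ((\<lambda>j. if j < d then
             \<theta> j - \<gamma> * (\<beta> * (\<Sum>i<n. X i j * ((\<Sum>l<d. X i l * \<theta> l) - y i))
                        - s (\<theta> j) \<alpha> - (if t = s0 then \<epsilon> * v j else 0))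
             + sqrt 2 * (b (Suc t) j - b t j)
           else 0),
      (\<lambda>k. if k < K then \<alpha> k + \<gamma> * G \<alpha> (emp d \<theta>) k else 0)))"

end

theory Submission
  imports Defs
begin
lemma chain:
  fixes f :: "(nat\<Rightarrow>real)\<Rightarrow>real" and g :: "real\<Rightarrow>nat\<Rightarrow>real"
  assumes fr: "\<forall>e>0. \<exists>r>0. \<forall>h\<in>dvec m. L2_set h {..<m} < r \<longrightarrow>
        \<bar>f (\<lambda>j. g 0 j + h j) - f (g 0) - (\<Sum>j<m. Df j * h j)\<bar> \<le> e * L2_set h {..<m}"
  and gd: "\<And>\<epsilon>. g \<epsilon> \<in> dvec m"
  and der: "\<And>j. j<m \<Longrightarrow> ((\<lambda>\<epsilon>. g \<epsilon> j) has_real_derivative g' j) (at 0)"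
  shows "((\<lambda>\<epsilon>. f (g \<epsilon>)) has_real_derivative (\<Sum>j<m. Df j * g' j)) (at 0)"
proof -
  define R where "R \<epsilon> = f (g \<epsilon>) - f (g 0) - (\<Sum>j<m. Df j * (g \<epsilon> j - g 0 j))" for \<epsilon>
  have lin: "((\<lambda>\<epsilon>. f (g 0) + (\<Sum>j<m. Df j * (g \<epsilon> j - g 0 j))) has_real_derivative (\<Sum>j<m. Df j * g' j)) (at 0)"
    by (auto intro!: derivative_eq_intros der simp: mult.commute)
  define M where "M = (\<Sum>j<m. \<bar>g' j\<bar>) + 1"
  have Mpos: "M > 0" unfolding M_def by (simp add: add_nonneg_pos sum_nonneg)
  have q: "((\<lambda>\<epsilon>. (g \<epsilon> j - g 0 j) / \<epsilon>) \<longlongrightarrow> g' j) (at 0)" if "j < m" for j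
    using der[OF that] unfolding has_field_derivative_iff by simp
  have "((\<lambda>\<epsilon>. \<Sum>j<m. \<bar>(g \<epsilon> j - g 0 j) / \<epsilon>\<bar>) \<longlongrightarrow> (\<Sum>j<m. \<bar>g' j\<bar>)) (at 0)"
    by (intro tendsto_sum tendsto_rabs q) simp
  then have ev1: "eventually (\<lambda>\<epsilon>. (\<Sum>j<m. \<bar>(g \<epsilon> j - g 0 j) / \<epsilon>\<bar>) < M) (at 0)"
    by (rule order_tendstoD(2)) (simp add: M_def)
  have c: "((\<lambda>\<epsilon>. g \<epsilon> j) \<longlongrightarrow> g 0 j) (at 0)" if "j < m" for j
    using DERIV_isCont[OF der[OF that]] by (simp add: isCont_def)
  have "((\<lambda>\<epsilon>. \<Sum>j<m. \<bar>g \<epsilon> j - g 0 j\<bar>) \<longlongrightarrow> (\<Sum>j<m. \<bar>g 0 j - g 0 j\<bar>)) (at 0)"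
    by (intro tendsto_sum tendsto_rabs tendsto_diff c) auto
  then have c2: "((\<lambda>\<epsilon>. \<Sum>j<m. \<bar>g \<epsilon> j - g 0 j\<bar>) \<longlongrightarrow> 0) (at 0)" by simp
  have R0: "((\<lambda>\<epsilon>. R \<epsilon> / \<epsilon>) \<longlongrightarrow> 0) (at 0)"
    unfolding tendsto_iff
  proof (intro allI impI)
    fix e :: real assume e: "e > 0"
    define e' where "e' = e / (2*M)"
    have e': "e' > 0" using e Mpos by (simp add: e'_def)
    obtain r where r: "r > 0" and hr: "\<forall>h\<in>dvec m. L2_set h {..<m} < r \<longrightarrow>
        \<bar>f (\<lambda>j. g 0 j + h j) - f (g 0) - (\<Sum>j<m. Df j * h j)\<bar> \<le> e' * L2_set h {..<m}"
      using fr e' by blast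
    have ev2: "eventually (\<lambda>\<epsilon>. (\<Sum>j<m. \<bar>g \<epsilon> j - g 0 j\<bar>) < r) (at 0)"
      using order_tendstoD(2)[OF c2 r] .
    have ev3: "eventually (\<lambda>\<epsilon>. \<epsilon> \<noteq> 0) (at (0::real))"
      by (simp add: eventually_at_filter)
    show "eventually (\<lambda>\<epsilon>. dist (R \<epsilon> / \<epsilon>) 0 < e) (at 0)"
      using ev1 ev2 ev3
    proof eventually_elim
      case (elim \<epsilon>)
      define h where "h j = g \<epsilon> j - g 0 j" for j
      have hd: "h \<in> dvec m" using gd[of \<epsilon>] gd[of 0] by (auto simp: dvec_def h_def)
      have L2h: "L2_set h {..<m} \<le> (\<Sum>j<m. \<bar>h j\<bar>)" by (rule L2_set_le_sum_abs)
      have "L2_set h {..<m} < r" using L2h elim(2) h_def by simp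
      with hr hd have "\<bar>f (\<lambda>j. g 0 j + h j) - f (g 0) - (\<Sum>j<m. Df j * h j)\<bar> \<le> e' * L2_set h {..<m}"
        by blast
      moreover have "(\<lambda>j. g 0 j + h j) = g \<epsilon>" by (auto simp: h_def)
      ultimately have "\<bar>R \<epsilon>\<bar> \<le> e' * (\<Sum>j<m. \<bar>h j\<bar>)"
        using L2h e' unfolding R_def h_def
        by (smt (verit, best) mult_left_mono)
      then have "\<bar>R \<epsilon>\<bar> / \<bar>\<epsilon>\<bar> \<le> e' * ((\<Sum>j<m. \<bar>h j\<bar>) / \<bar>\<epsilon>\<bar>)"
        by (simp add: divide_right_mono)
      also have "(\<Sum>j<m. \<bar>h j\<bar>) / \<bar>\<epsilon>\<bar> = (\<Sum>j<m. \<bar>(g \<epsilon> j - g 0 j) / \<epsilon>\<bar>)"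
        by (simp add: h_def sum_divide_distrib)
      also have "e' * \<dots> \<le> e' * M" using elim(1) e' by simp
      also have "e' * M < e" using e Mpos by (simp add: e'_def)
      finally show ?case by (simp add: abs_divide)
    qed
  qed
  have "(R has_real_derivative 0) (at 0)"
    unfolding has_field_derivative_iff using R0 by (simp add: R_def)
  from DERIV_add[OF lin this] show ?thesis
    by (simp add: R_def)
qed

lemma L2_set_zero [simp]: "L2_set (\<lambda>i. 0) A = 0"
  unfolding L2_set_def by simp

lemma L2_set_abs: "L2_set (\<lambda>i. \<bar>f i\<bar>) A = L2_set f A"
  unfolding L2_set_def by simp

lemma L2_set_scale: "L2_set (\<lambda>i. c * f i) A = \<bar>c\<bar> * L2_set f A"
proof -
  have "L2_set (\<lambda>i. c * f i) A = L2_set (\<lambda>i. \<bar>c\<bar> * \<bar>f i\<bar>) A"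
    unfolding L2_set_def by (simp add: power_mult_distrib)
  also have "\<dots> = \<bar>c\<bar> * L2_set (\<lambda>i. \<bar>f i\<bar>) A" by (simp add: L2_set_right_distrib)
  finally show ?thesis by (simp add: L2_set_abs)
qed

lemma L2_set_div: "L2_set (\<lambda>i. f i / c) A = L2_set f A / \<bar>c\<bar>"
  using L2_set_scale[of "1/c" f A] by (simp add: divide_inverse mult.commute)

lemma sum_CS: "\<bar>\<Sum>j\<in>S. a j * b j\<bar> \<le> L2_set a S * L2_set b S"
proof -
  have "\<bar>\<Sum>j\<in>S. a j * b j\<bar> \<le> (\<Sum>j\<in>S. \<bar>a j\<bar> * \<bar>b j\<bar>)"
    by (metis (no_types, lifting) abs_mult sum.cong sum_abs)
  also have "\<dots> \<le> L2_set a S * L2_set b S" by (rule L2_set_mult_ineq)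
  finally show ?thesis .
qed

lemma L2_set_le_const:
  assumes "\<And>i. i \<in> A \<Longrightarrow> \<bar>f i\<bar> \<le> c"
  shows "L2_set f A \<le> sqrt (real (card A)) * c"
proof (cases "A = {}")
  case True then show ?thesis by simp
next
  case False
  then obtain i where "i \<in> A" by auto
  then have c0: "c \<ge> 0" using assms[of i] by simp
  have "L2_set f A = L2_set (\<lambda>i. \<bar>f i\<bar>) A" by (simp add: L2_set_abs)
  also have "\<dots> \<le> L2_set (\<lambda>i. c) A" by (rule L2_set_mono) (auto simp: assms)
  also have "\<dots> = sqrt (real (card A)) * c" using c0 by (simp add: L2_set_constant)
  finally show ?thesis .
qed

lemma opn_aux:
  fixes A :: "nat \<Rightarrow> nat \<Rightarrow> real"
  shows "L2_set (\<lambda>i. \<Sum>j\<in>S. A i j * v j) R \<le> L2_set v S * L2_set (\<lambda>i. L2_set (A i) S) R"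
proof -
  have "L2_set (\<lambda>i. \<Sum>j\<in>S. A i j * v j) R = L2_set (\<lambda>i. \<bar>\<Sum>j\<in>S. A i j * v j\<bar>) R"
    by (simp add: L2_set_abs)
  also have "\<dots> \<le> L2_set (\<lambda>i. L2_set (A i) S * L2_set v S) R"
    by (rule L2_set_mono) (auto simp: sum_CS)
  also have "\<dots> = L2_set v S * L2_set (\<lambda>i. L2_set (A i) S) R"
    by (simp add: L2_set_scale mult.commute)
  finally show ?thesis .
qed

lemma opn_props:
  fixes A :: "nat \<Rightarrow> nat \<Rightarrow> real"
  assumes "finite S"
  shows "opn R S A \<ge> 0" and "L2_set (\<lambda>i. \<Sum>j\<in>S. A i j * v j) R \<le> opn R S A * L2_set v S"
proof -
  define val where "val v = L2_set (\<lambda>i. \<Sum>j\<in>S. A i j * v j) R" for v :: "nat \<Rightarrow> real"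
  define B where "B = L2_set (\<lambda>i. L2_set (A i) S) R"
  have B0: "B \<ge> 0" by (simp add: B_def)
  have bdd: "bdd_above {val v | v. L2_set v S \<le> 1}"
  proof (rule bdd_aboveI)
    fix x assume "x \<in> {val v | v. L2_set v S \<le> 1}"
    then obtain w where x: "x = val w" and w: "L2_set w S \<le> 1" by auto
    have "val w \<le> L2_set w S * B" unfolding val_def B_def by (rule opn_aux)
    also have "\<dots> \<le> 1 * B" using w B0 by (intro mult_right_mono) auto
    finally show "x \<le> B" using x by simp
  qed
  have opn_eq: "opn R S A = Sup {val v | v. L2_set v S \<le> 1}"
    unfolding opn_def val_def by simp
  have up: "val w \<le> opn R S A" if "L2_set w S \<le> 1" for w
    unfolding opn_eq by (rule cSup_upper) (use that bdd in auto)
  have "val (\<lambda>_. 0) \<le> opn R S A" by (rule up) (simp add: L2_set_def)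
  then show o0: "opn R S A \<ge> 0" by (simp add: val_def L2_set_def)
  show "L2_set (\<lambda>i. \<Sum>j\<in>S. A i j * v j) R \<le> opn R S A * L2_set v S"
  proof (cases "L2_set v S = 0")
    case True
    then have "\<forall>j\<in>S. v j = 0" using assms by (simp add: L2_set_eq_0_iff)
    then have "(\<lambda>i. \<Sum>j\<in>S. A i j * v j) = (\<lambda>i. 0)" by auto
    then show ?thesis using True by simp
  next
    case False
    define c where "c = L2_set v S"
    have c: "c > 0" using False c_def by (simp add: order_le_neq_trans)
    define w where "w j = v j / c" for j
    have "L2_set w S = (1/c) * L2_set v S"
      using c unfolding w_def by (simp add: L2_set_scale divide_inverse mult.commute)
    also have "\<dots> = 1" using c by (simp add: c_def)
    finally have "val w \<le> opn R S A" by (intro up) simp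
    moreover have "val w = (1/c) * val v"
    proof -
      have "(\<lambda>i. \<Sum>j\<in>S. A i j * w j) = (\<lambda>i. (1/c) * (\<Sum>j\<in>S. A i j * v j))"
        unfolding w_def by (simp add: sum_distrib_left mult_ac)
      then show ?thesis unfolding val_def using c by (simp add: L2_set_div)
    qed
    ultimately have "val v \<le> opn R S A * c" using c by (simp add: field_simps)
    then show ?thesis by (simp add: val_def c_def)
  qed
qed

lemma opn_T:
  fixes A :: "nat \<Rightarrow> nat \<Rightarrow> real"
  assumes "finite S" "finite R"
  shows "L2_set (\<lambda>j. \<Sum>i\<in>R. A i j * u i) S \<le> opn R S A * L2_set u R"
proof -
  define w where "w j = (\<Sum>i\<in>R. A i j * u i)" for j
  have "(L2_set w S)^2 = (\<Sum>j\<in>S. w j * w j)"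
    unfolding L2_set_def by (simp add: sum_nonneg power2_eq_square)
  also have "\<dots> = (\<Sum>i\<in>R. u i * (\<Sum>j\<in>S. A i j * w j))"
    unfolding w_def by (simp add: sum_distrib_left sum_distrib_right mult_ac sum.swap[of _ S R])
  also have "\<dots> \<le> L2_set u R * L2_set (\<lambda>i. \<Sum>j\<in>S. A i j * w j) R"
    using sum_CS[of u "\<lambda>i. \<Sum>j\<in>S. A i j * w j" R] by (smt (verit))
  also have "\<dots> \<le> L2_set u R * (opn R S A * L2_set w S)"
    by (intro mult_left_mono opn_props(2) assms) simp
  finally have *: "(L2_set w S)^2 \<le> (opn R S A * L2_set u R) * L2_set w S"
    by (simp add: mult_ac)
  show ?thesis
  proof (cases "L2_set w S = 0")
    case True then show ?thesis using opn_props(1)[OF assms(1)] unfolding w_def by simp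
  next
    case False
    then have "L2_set w S > 0" by (simp add: order_le_neq_trans)
    with * show ?thesis unfolding w_def by (simp add: power2_eq_square)
  qed
qed

lemma dyn_dvec:
  assumes "\<theta>0 \<in> dvec d" "\<alpha>0 \<in> dvec K"
  shows "fst (dyn K s G \<beta> \<gamma> d n X y \<theta>0 \<alpha>0 b v s0 \<epsilon> t) \<in> dvec d \<and>
         snd (dyn K s G \<beta> \<gamma> d n X y \<theta>0 \<alpha>0 b v s0 \<epsilon> t) \<in> dvec K"
  using assms by (cases t) (auto simp: dvec_def split_beta Let_def)

lemma dyn_fst_Suc:
  "fst (dyn K s G \<beta> \<gamma> d n X y \<theta>0 \<alpha>0 b v s0 \<epsilon> (Suc t)) l =
    (if l < d then
       fst (dyn K s G \<beta> \<gamma> d n X y \<theta>0 \<alpha>0 b v s0 \<epsilon> t) l - \<gamma> * (\<beta> * (\<Sum>i<n. X i l * ((\<Sum>m<d. X i m * fst (dyn K s G \<beta> \<gamma> d n X y \<theta>0 \<alpha>0 b v s0 \<epsilon> t) m) - y i))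
         - s (fst (dyn K s G \<beta> \<gamma> d n X y \<theta>0 \<alpha>0 b v s0 \<epsilon> t) l) (snd (dyn K s G \<beta> \<gamma> d n X y \<theta>0 \<alpha>0 b v s0 \<epsilon> t))
         - (if t = s0 then \<epsilon> * v l else 0))
       + sqrt 2 * (b (Suc t) l - b t l)
     else 0)"
  by (simp add: split_beta Let_def)

lemma dyn_snd_Suc:
  "snd (dyn K s G \<beta> \<gamma> d n X y \<theta>0 \<alpha>0 b v s0 \<epsilon> (Suc t)) k =
    (if k < K then snd (dyn K s G \<beta> \<gamma> d n X y \<theta>0 \<alpha>0 b v s0 \<epsilon> t) k
        + \<gamma> * G (snd (dyn K s G \<beta> \<gamma> d n X y \<theta>0 \<alpha>0 b v s0 \<epsilon> t)) (emp d (fst (dyn K s G \<beta> \<gamma> d n X y \<theta>0 \<alpha>0 b v s0 \<epsilon> t))) k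
     else 0)"
  by (simp add: split_beta Let_def)

lemma sum_split_add: "(\<Sum>m<d+(K::nat). F m) = (\<Sum>m<d. F m) + (\<Sum>k<K. F (d+k))"
  by (induct K rule: nat.induct) (auto simp: add.assoc)

lemma L2_set_shift: "L2_set (\<lambda>k. f (d+k)) {..<K::nat} = L2_set f {d..<d+K}"
proof -
  have "{d..<d+K} = (\<lambda>k. d+k) ` {..<K}"
  proof (rule set_eqI)
    fix x
    show "x \<in> {d..<d+K} \<longleftrightarrow> x \<in> (\<lambda>k. d+k) ` {..<K}"
    proof
      assume "x \<in> {d..<d+K}"
      then show "x \<in> (\<lambda>k. d+k) ` {..<K}" by (intro image_eqI[of _ _ "x-d"]) auto
    qed auto
  qed
  then show ?thesis unfolding L2_set_def by (simp add: sum.reindex)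
qed

lemma L2_set_Suc_le: "L2_set (\<lambda>k. f (Suc k)) {..<K::nat} \<le> L2_set f {..<Suc K}"
  unfolding L2_set_def
  by (intro real_sqrt_le_mono) (simp add: sum.lessThan_Suc_shift del: sum.lessThan_Suc)

lemma abs_le_L2_set: "finite A \<Longrightarrow> i \<in> A \<Longrightarrow> \<bar>f i\<bar> \<le> L2_set f A"
  using member_le_L2_set[of A i "\<lambda>i. \<bar>f i\<bar>"] by (simp add: L2_set_abs)
lemma fin_ineq:
  fixes a an sd sK \<gamma> B CA Vt :: real
  assumes "\<gamma> \<ge> 0" "B \<ge> 0" "sd * an \<ge> 0" "CA \<ge> 0"
  shows "a + \<gamma> * (B * a + CA * a + sd * (CA * an) + Vt) + (sd * an + \<gamma> * (sK * (CA * a + CA * (sd * an))))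
     \<le> (1 + \<gamma> * (B + (1 + sK) * \<bar>CA\<bar>)) * (a + sd * an) + \<gamma> * Vt"
proof -
  have e: "(1 + \<gamma> * (B + (1 + sK) * \<bar>CA\<bar>)) * (a + sd * an) + \<gamma> * Vt
     - (a + \<gamma> * (B * a + CA * a + sd * (CA * an) + Vt) + (sd * an + \<gamma> * (sK * (CA * a + CA * (sd * an)))))
     = \<gamma> * B * (sd * an)"
    using assms(4) by (simp add: algebra_simps)
  have "0 \<le> \<gamma> * B * (sd * an)" using assms by simp
  then show ?thesis using e by linarith
qed

lemma step:
  assumes A3: "A3 K CA s" and A4: "A4 K CA G" and \<gamma>: "\<gamma> > 0" and d: "d > 0"
    and Xop: "opn {..<n} {..<d} X \<le> C0" and th0: "\<theta>0 \<in> dvec d" and al0: "\<alpha>0 \<in> dvec K"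
    and V: "L2_set v {..<d} \<le> V"
    and IHt: "\<forall>l<d. ((\<lambda>\<epsilon>. fst (dyn K s G \<beta> \<gamma> d n X y \<theta>0 \<alpha>0 b v s0 \<epsilon> t) l) has_real_derivative D\<theta> l) (at 0)"
    and IHa: "\<forall>k<K. ((\<lambda>\<epsilon>. snd (dyn K s G \<beta> \<gamma> d n X y \<theta>0 \<alpha>0 b v s0 \<epsilon> t) k) has_real_derivative D\<alpha> k) (at 0)"
  shows "\<exists>D\<theta>' D\<alpha>'.
     (\<forall>l<d. ((\<lambda>\<epsilon>. fst (dyn K s G \<beta> \<gamma> d n X y \<theta>0 \<alpha>0 b v s0 \<epsilon> (Suc t)) l) has_real_derivative D\<theta>' l) (at 0)) \<and>
     (\<forall>k<K. ((\<lambda>\<epsilon>. snd (dyn K s G \<beta> \<gamma> d n X y \<theta>0 \<alpha>0 b v s0 \<epsilon> (Suc t)) k) has_real_derivative D\<alpha>' k) (at 0)) \<and>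
     L2_set D\<theta>' {..<d} + sqrt (real d) * L2_set D\<alpha>' {..<K}
       \<le> (1 + \<gamma> * (\<bar>\<beta>\<bar> * C0^2 + (1 + sqrt (real K)) * \<bar>CA\<bar>)) * (L2_set D\<theta> {..<d} + sqrt (real d) * L2_set D\<alpha> {..<K})
         + \<gamma> * (if t = s0 then V else 0)"
proof -
  define Th where "Th \<epsilon> = fst (dyn K s G \<beta> \<gamma> d n X y \<theta>0 \<alpha>0 b v s0 \<epsilon> t)" for \<epsilon>
  define Al where "Al \<epsilon> = snd (dyn K s G \<beta> \<gamma> d n X y \<theta>0 \<alpha>0 b v s0 \<epsilon> t)" for \<epsilon>
  have Thd: "Th \<epsilon> \<in> dvec d" and Ald: "Al \<epsilon> \<in> dvec K" for \<epsilon>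
    using dyn_dvec[OF th0 al0] by (auto simp: Th_def Al_def)
  have IHt': "((\<lambda>\<epsilon>. Th \<epsilon> l) has_real_derivative D\<theta> l) (at 0)" if "l < d" for l
    using IHt that by (simp add: Th_def)
  have IHa': "((\<lambda>\<epsilon>. Al \<epsilon> k) has_real_derivative D\<alpha> k) (at 0)" if "k < K" for k
    using IHa that by (simp add: Al_def)
  have Al_eq: "(\<lambda>k. if k < K then Al \<epsilon> k else 0) = Al \<epsilon>" for \<epsilon>
    using Ald[of \<epsilon>] by (auto simp: dvec_def)
  have Th_eq: "(\<lambda>j. if j < d then Th \<epsilon> j else 0) = Th \<epsilon>" for \<epsilon>
    using Thd[of \<epsilon>] by (auto simp: dvec_def)
  have CA0: "CA \<ge> 0"
  proof -
    have "(\<lambda>_. 0::real) \<in> dvec K" by (simp add: dvec_def)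
    then have "\<bar>s 0 (\<lambda>_. 0)\<bar> \<le> CA * (1 + \<bar>0\<bar> + L2_set (\<lambda>_. 0) {..<K})"
      using A3 unfolding A3_def by blast
    then show ?thesis by simp
  qed
  obtain Ds D2s where C2s: "C2_on (Suc K) (\<lambda>z. s (z 0) (\<lambda>k. if k < K then z (Suc k) else 0)) Ds D2s"
    and Dsb: "\<And>z. z \<in> dvec (Suc K) \<Longrightarrow> L2_set (Ds z) {..<Suc K} \<le> CA"
    using A3 unfolding A3_def by blast
  define PG where "PG k DG \<longleftrightarrow> (\<exists>D2G.
        C2_on (d + K) (\<lambda>z. G (\<lambda>k'. if k' < K then z (d + k') else 0)
                            (emp d (\<lambda>j. if j < d then z j else 0)) k) DG D2G \<and>
        (\<forall>z\<in>dvec (d + K).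
           L2_set (DG z) {d..<d+K} \<le> CA \<and>
           sqrt (real d) * L2_set (DG z) {..<d} \<le> CA \<and>
           real d * opn {..<d} {..<d} (D2G z) \<le> CA \<and>
           sqrt (real d) * opn {..<d} {d..<d+K} (D2G z) \<le> CA \<and>
           opn {d..<d+K} {d..<d+K} (D2G z) \<le> CA))" for k DG
  have "\<forall>k\<in>{..<K}. \<exists>DG. PG k DG"
    using A4 d unfolding A4_def PG_def by auto
  then obtain DG where DG0: "\<forall>k\<in>{..<K}. PG k (DG k)"
    using bchoice by blast
  have DG: "\<exists>D2G.
        C2_on (d + K) (\<lambda>z. G (\<lambda>k'. if k' < K then z (d + k') else 0)
                            (emp d (\<lambda>j. if j < d then z j else 0)) k) (DG k) D2G \<and>
        (\<forall>z\<in>dvec (d + K).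
           L2_set (DG k z) {d..<d+K} \<le> CA \<and>
           sqrt (real d) * L2_set (DG k z) {..<d} \<le> CA \<and>
           real d * opn {..<d} {..<d} (D2G z) \<le> CA \<and>
           sqrt (real d) * opn {..<d} {d..<d+K} (D2G z) \<le> CA \<and>
           opn {d..<d+K} {d..<d+K} (D2G z) \<le> CA)" if "k < K" for k
    using DG0 that unfolding PG_def by blast
  define zs where "zs l = (\<lambda>m. if m = 0 then Th 0 l else if m \<le> K then Al 0 (m-1) else 0)" for l
  have zsd: "zs l \<in> dvec (Suc K)" for l by (auto simp: dvec_def zs_def)
  define S1 where "S1 l = Ds (zs l) 0 * D\<theta> l" for l
  define S2 where "S2 l = (\<Sum>k<K. Ds (zs l) (Suc k) * D\<alpha> k)" for l
  have sder: "((\<lambda>\<epsilon>. s (Th \<epsilon> l) (Al \<epsilon>)) has_real_derivative S1 l + S2 l) (at 0)" if l: "l < d" for l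
  proof -
    define g where "g \<epsilon> = (\<lambda>m. if m = 0 then Th \<epsilon> l else if m \<le> K then Al \<epsilon> (m-1) else 0)" for \<epsilon>
    define g' where "g' = (\<lambda>m. if m = 0 then D\<theta> l else if m \<le> K then D\<alpha> (m-1) else 0)"
    have zg: "zs l = g 0" by (simp add: zs_def g_def)
    have gd: "g \<epsilon> \<in> dvec (Suc K)" for \<epsilon> by (auto simp: dvec_def g_def)
    have fr: "\<forall>e>0. \<exists>r>0. \<forall>h\<in>dvec (Suc K). L2_set h {..<Suc K} < r \<longrightarrow>
        \<bar>(\<lambda>z. s (z 0) (\<lambda>k. if k < K then z (Suc k) else 0)) (\<lambda>j. g 0 j + h j)
         - (\<lambda>z. s (z 0) (\<lambda>k. if k < K then z (Suc k) else 0)) (g 0)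
         - (\<Sum>j<Suc K. Ds (g 0) j * h j)\<bar> \<le> e * L2_set h {..<Suc K}"
      using C2s gd[of 0] unfolding C2_on_def by blast
    have gder: "((\<lambda>\<epsilon>. g \<epsilon> j) has_real_derivative g' j) (at 0)" if "j < Suc K" for j
    proof (cases j)
      case 0 then show ?thesis using IHt'[OF l] by (simp add: g_def g'_def)
    next
      case (Suc j') then show ?thesis using IHa'[of j'] that by (simp add: g_def g'_def)
    qed
    have ch: "((\<lambda>\<epsilon>. (\<lambda>z. s (z 0) (\<lambda>k. if k < K then z (Suc k) else 0)) (g \<epsilon>)) has_real_derivative
        (\<Sum>j<Suc K. Ds (g 0) j * g' j)) (at 0)"
      by (rule chain[OF fr gd gder])
    have e1: "(\<lambda>\<epsilon>. (\<lambda>z. s (z 0) (\<lambda>k. if k < K then z (Suc k) else 0)) (g \<epsilon>)) = (\<lambda>\<epsilon>. s (Th \<epsilon> l) (Al \<epsilon>))"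
    proof -
      have e0: "(\<lambda>k. if k < K then g \<epsilon> (Suc k) else 0) = Al \<epsilon>" for \<epsilon>
        using Ald[of \<epsilon>] by (auto simp: g_def dvec_def)
      show ?thesis by (simp add: e0) (simp add: g_def)
    qed
    have e2: "(\<Sum>j<Suc K. Ds (g 0) j * g' j) = S1 l + S2 l"
      unfolding S1_def S2_def zg sum.lessThan_Suc_shift
      by (auto simp: g'_def intro!: sum.cong)
    show ?thesis using ch unfolding e1 e2 .
  qed
  define zg where "zg = (\<lambda>m. if m < d then Th 0 m else if m < d + K then Al 0 (m-d) else 0)"
  have zgd: "zg \<in> dvec (d + K)" by (auto simp: dvec_def zg_def)
  define P where "P k = (\<Sum>j<d. DG k zg j * D\<theta> j)" for k
  define Q where "Q k = (\<Sum>k'<K. DG k zg (d+k') * D\<alpha> k')" for k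
  have gder: "((\<lambda>\<epsilon>. G (Al \<epsilon>) (emp d (Th \<epsilon>)) k) has_real_derivative P k + Q k) (at 0)" if k: "k < K" for k
  proof -
    obtain D2G where C2g: "C2_on (d + K) (\<lambda>z. G (\<lambda>k'. if k' < K then z (d + k') else 0)
                            (emp d (\<lambda>j. if j < d then z j else 0)) k) (DG k) D2G"
      using DG[OF k] by blast
    define g where "g \<epsilon> = (\<lambda>m. if m < d then Th \<epsilon> m else if m < d + K then Al \<epsilon> (m-d) else 0)" for \<epsilon>
    define g' where "g' = (\<lambda>m. if m < d then D\<theta> m else if m < d + K then D\<alpha> (m-d) else 0)"
    have zg': "zg = g 0" by (simp add: zg_def g_def)
    have gd: "g \<epsilon> \<in> dvec (d + K)" for \<epsilon> by (auto simp: dvec_def g_def)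
    have fr: "\<forall>e>0. \<exists>r>0. \<forall>h\<in>dvec (d + K). L2_set h {..<d + K} < r \<longrightarrow>
        \<bar>(\<lambda>z. G (\<lambda>k'. if k' < K then z (d + k') else 0) (emp d (\<lambda>j. if j < d then z j else 0)) k) (\<lambda>j. g 0 j + h j)
         - (\<lambda>z. G (\<lambda>k'. if k' < K then z (d + k') else 0) (emp d (\<lambda>j. if j < d then z j else 0)) k) (g 0)
         - (\<Sum>j<d + K. DG k (g 0) j * h j)\<bar> \<le> e * L2_set h {..<d + K}"
      using C2g gd[of 0] unfolding C2_on_def by blast
    have gder: "((\<lambda>\<epsilon>. g \<epsilon> j) has_real_derivative g' j) (at 0)" if "j < d + K" for j
    proof (cases "j < d")
      case True then show ?thesis using IHt'[of j] by (simp add: g_def g'_def)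
    next
      case False then show ?thesis using IHa'[of "j - d"] that by (simp add: g_def g'_def)
    qed
    have ch: "((\<lambda>\<epsilon>. (\<lambda>z. G (\<lambda>k'. if k' < K then z (d + k') else 0) (emp d (\<lambda>j. if j < d then z j else 0)) k) (g \<epsilon>))
        has_real_derivative (\<Sum>j<d + K. DG k (g 0) j * g' j)) (at 0)"
      by (rule chain[OF fr gd gder])
    have e0: "(\<lambda>k'. if k' < K then g \<epsilon> (d + k') else 0) = Al \<epsilon>" for \<epsilon>
      using Ald[of \<epsilon>] by (auto simp: g_def dvec_def)
    have e0': "(\<lambda>j. if j < d then g \<epsilon> j else 0) = Th \<epsilon>" for \<epsilon>
      using Thd[of \<epsilon>] by (auto simp: g_def dvec_def)
    have e1: "(\<lambda>\<epsilon>. (\<lambda>z. G (\<lambda>k'. if k' < K then z (d + k') else 0) (emp d (\<lambda>j. if j < d then z j else 0)) k) (g \<epsilon>))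
        = (\<lambda>\<epsilon>. G (Al \<epsilon>) (emp d (Th \<epsilon>)) k)"
      by (simp only: e0 e0')
    have e2: "(\<Sum>j<d + K. DG k (g 0) j * g' j) = P k + Q k"
      unfolding P_def Q_def zg' sum_split_add
      by (auto simp: g'_def intro!: sum.cong arg_cong2[where f="(+)"])
    show ?thesis using ch unfolding e1 e2 .
  qed
  define u where "u l = (\<Sum>i<n. X i l * (\<Sum>m<d. X i m * D\<theta> m))" for l
  define c where "c = (if t = s0 then 1 else 0 :: real)"
  define W where "W l = (-\<beta>) * u l + (S1 l + S2 l) + c * v l" for l
  define D\<theta>' where "D\<theta>' l = D\<theta> l + \<gamma> * W l" for l
  define D\<alpha>' where "D\<alpha>' k = D\<alpha> k + \<gamma> * (P k + Q k)" for k
  have dert: "((\<lambda>\<epsilon>. fst (dyn K s G \<beta> \<gamma> d n X y \<theta>0 \<alpha>0 b v s0 \<epsilon> (Suc t)) l) has_real_derivative D\<theta>' l) (at 0)"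
    if l: "l < d" for l
  proof -
    have pert: "((\<lambda>\<epsilon>. if t = s0 then \<epsilon> * v l else 0) has_real_derivative c * v l) (at 0)"
      by (cases "t = s0") (auto simp: c_def intro!: derivative_eq_intros)
    have e: "(\<lambda>\<epsilon>. fst (dyn K s G \<beta> \<gamma> d n X y \<theta>0 \<alpha>0 b v s0 \<epsilon> (Suc t)) l) =
      (\<lambda>\<epsilon>. Th \<epsilon> l - \<gamma> * (\<beta> * (\<Sum>i<n. X i l * ((\<Sum>m<d. X i m * Th \<epsilon> m) - y i))
         - s (Th \<epsilon> l) (Al \<epsilon>) - (if t = s0 then \<epsilon> * v l else 0)) + sqrt 2 * (b (Suc t) l - b t l))"
      unfolding Th_def Al_def by (simp only: dyn_fst_Suc l if_True)
    have H: "((\<lambda>\<epsilon>. Th \<epsilon> l - \<gamma> * (\<beta> * (\<Sum>i<n. X i l * ((\<Sum>m<d. X i m * Th \<epsilon> m) - y i))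
         - s (Th \<epsilon> l) (Al \<epsilon>) - (if t = s0 then \<epsilon> * v l else 0)) + sqrt 2 * (b (Suc t) l - b t l))
       has_real_derivative (D\<theta> l - \<gamma> * (\<beta> * (\<Sum>i<n. X i l * ((\<Sum>m<d. X i m * D\<theta> m) - 0))
         - (S1 l + S2 l) - c * v l) + sqrt 2 * (0 - 0))) (at 0)"
      by (intro DERIV_add DERIV_diff DERIV_cmult DERIV_sum IHt' sder[OF l] pert DERIV_const) (use l in auto)
    have Eq: "D\<theta> l - \<gamma> * (\<beta> * (\<Sum>i<n. X i l * ((\<Sum>m<d. X i m * D\<theta> m) - 0))
         - (S1 l + S2 l) - c * v l) + sqrt 2 * (0 - 0) = D\<theta>' l"
      by (simp add: D\<theta>'_def W_def u_def algebra_simps)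
    show ?thesis by (subst e) (rule DERIV_cong[OF H Eq])
  qed
  have dera: "((\<lambda>\<epsilon>. snd (dyn K s G \<beta> \<gamma> d n X y \<theta>0 \<alpha>0 b v s0 \<epsilon> (Suc t)) k) has_real_derivative D\<alpha>' k) (at 0)"
    if k: "k < K" for k
  proof -
    have e: "(\<lambda>\<epsilon>. snd (dyn K s G \<beta> \<gamma> d n X y \<theta>0 \<alpha>0 b v s0 \<epsilon> (Suc t)) k) =
      (\<lambda>\<epsilon>. Al \<epsilon> k + \<gamma> * G (Al \<epsilon>) (emp d (Th \<epsilon>)) k)"
      unfolding Th_def Al_def by (simp only: dyn_snd_Suc k if_True)
    show ?thesis unfolding D\<alpha>'_def by (subst e) (intro DERIV_add DERIV_cmult IHa' gder k)
  qed
  define a where "a = L2_set D\<theta> {..<d}"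
  define an where "an = L2_set D\<alpha> {..<K}"
  have a0: "a \<ge> 0" and an0: "an \<ge> 0" by (simp_all add: a_def an_def)
  have op0: "opn {..<n} {..<d} X \<ge> 0" by (rule opn_props(1)) simp
  have C00: "C0 \<ge> 0" using op0 Xop by linarith
  have Bu: "L2_set u {..<d} \<le> C0^2 * a"
  proof -
    define w where "w i = (\<Sum>m<d. X i m * D\<theta> m)" for i
    have "L2_set w {..<n} \<le> opn {..<n} {..<d} X * a"
      unfolding w_def a_def by (rule opn_props(2)) simp
    also have "\<dots> \<le> C0 * a" by (rule mult_right_mono[OF Xop a0])
    finally have w1: "L2_set w {..<n} \<le> C0 * a" .
    have "L2_set u {..<d} \<le> opn {..<n} {..<d} X * L2_set w {..<n}"
      unfolding u_def w_def by (rule opn_T) simp_all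
    also have "\<dots> \<le> C0 * (C0 * a)" by (rule mult_mono[OF Xop w1 C00]) simp
    finally show ?thesis by (simp add: power2_eq_square)
  qed
  have BS1: "L2_set S1 {..<d} \<le> CA * a"
  proof -
    have "\<bar>S1 l\<bar> \<le> CA * \<bar>D\<theta> l\<bar>" for l
    proof -
      have "\<bar>Ds (zs l) 0\<bar> \<le> L2_set (Ds (zs l)) {..<Suc K}" by (rule abs_le_L2_set) auto
      also have "\<dots> \<le> CA" by (rule Dsb[OF zsd])
      finally show ?thesis unfolding S1_def abs_mult by (rule mult_right_mono) simp
    qed
    then have "L2_set (\<lambda>l. \<bar>S1 l\<bar>) {..<d} \<le> L2_set (\<lambda>l. CA * \<bar>D\<theta> l\<bar>) {..<d}"
      by (intro L2_set_mono) auto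
    then show ?thesis using CA0 by (simp add: L2_set_abs L2_set_scale a_def)
  qed
  have BS2: "L2_set S2 {..<d} \<le> sqrt (real d) * (CA * an)"
  proof -
    have "\<bar>S2 l\<bar> \<le> CA * an" for l
    proof -
      have "\<bar>S2 l\<bar> \<le> L2_set (\<lambda>k. Ds (zs l) (Suc k)) {..<K} * an"
        unfolding S2_def an_def by (rule sum_CS)
      also have "\<dots> \<le> L2_set (Ds (zs l)) {..<Suc K} * an"
        by (rule mult_right_mono[OF L2_set_Suc_le an0])
      also have "\<dots> \<le> CA * an" by (rule mult_right_mono[OF Dsb[OF zsd] an0])
      finally show ?thesis .
    qed
    then show ?thesis using L2_set_le_const[of "{..<d}" S2 "CA * an"] by simp
  qed
  have Bv: "L2_set (\<lambda>l. c * v l) {..<d} \<le> (if t = s0 then V else 0)"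
    using V by (simp add: L2_set_scale c_def)
  have BW: "L2_set W {..<d} \<le> \<bar>\<beta>\<bar> * (C0^2 * a) + CA * a + sqrt (real d) * (CA * an) + (if t = s0 then V else 0)"
  proof -
    have L1: "L2_set W {..<d} \<le> L2_set (\<lambda>l. (-\<beta>) * u l + (S1 l + S2 l)) {..<d} + L2_set (\<lambda>l. c * v l) {..<d}"
      unfolding W_def by (rule L2_set_triangle_ineq)
    have L2: "L2_set (\<lambda>l. (-\<beta>) * u l + (S1 l + S2 l)) {..<d} \<le> L2_set (\<lambda>l. (-\<beta>) * u l) {..<d} + L2_set (\<lambda>l. S1 l + S2 l) {..<d}"
      by (rule L2_set_triangle_ineq)
    have L3: "L2_set (\<lambda>l. S1 l + S2 l) {..<d} \<le> L2_set S1 {..<d} + L2_set S2 {..<d}"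
      by (rule L2_set_triangle_ineq)
    have L4: "L2_set (\<lambda>l. (-\<beta>) * u l) {..<d} = \<bar>\<beta>\<bar> * L2_set u {..<d}"
      using L2_set_scale[of "-\<beta>" u "{..<d}"] by simp
    have L5: "\<bar>\<beta>\<bar> * L2_set u {..<d} \<le> \<bar>\<beta>\<bar> * (C0^2 * a)" by (rule mult_left_mono[OF Bu]) simp
    show ?thesis using L1 L2 L3 L4 L5 BS1 BS2 Bv by linarith
  qed
  have Bt: "L2_set D\<theta>' {..<d} \<le> a + \<gamma> * (\<bar>\<beta>\<bar> * (C0^2 * a) + CA * a + sqrt (real d) * (CA * an) + (if t = s0 then V else 0))"
  proof -
    have L1: "L2_set D\<theta>' {..<d} \<le> a + L2_set (\<lambda>l. \<gamma> * W l) {..<d}"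
      unfolding D\<theta>'_def a_def by (rule L2_set_triangle_ineq)
    have L2: "L2_set (\<lambda>l. \<gamma> * W l) {..<d} = \<gamma> * L2_set W {..<d}" using \<gamma> by (simp add: L2_set_scale)
    have L3: "\<gamma> * L2_set W {..<d} \<le> \<gamma> * (\<bar>\<beta>\<bar> * (C0^2 * a) + CA * a + sqrt (real d) * (CA * an) + (if t = s0 then V else 0))"
      by (rule mult_left_mono[OF BW]) (use \<gamma> in simp)
    show ?thesis using L1 L2 L3 by linarith
  qed
  have sd: "sqrt (real d) > 0" using d by simp
  have BPQ: "\<bar>P k + Q k\<bar> \<le> CA / sqrt (real d) * a + CA * an" if k: "k < K" for k
  proof -
    obtain D2G where bnd: "\<forall>z\<in>dvec (d + K).
           L2_set (DG k z) {d..<d+K} \<le> CA \<and>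
           sqrt (real d) * L2_set (DG k z) {..<d} \<le> CA"
      using DG[OF k] by blast
    have b1: "L2_set (DG k zg) {d..<d+K} \<le> CA" and b2: "sqrt (real d) * L2_set (DG k zg) {..<d} \<le> CA"
      using bnd zgd by auto
    have b2': "L2_set (DG k zg) {..<d} \<le> CA / sqrt (real d)"
      using b2 sd by (simp add: field_simps)
    have "\<bar>P k\<bar> \<le> L2_set (DG k zg) {..<d} * a" unfolding P_def a_def by (rule sum_CS)
    also have "\<dots> \<le> CA / sqrt (real d) * a" by (rule mult_right_mono[OF b2' a0])
    finally have p: "\<bar>P k\<bar> \<le> CA / sqrt (real d) * a" .
    have "\<bar>Q k\<bar> \<le> L2_set (\<lambda>k'. DG k zg (d+k')) {..<K} * an" unfolding Q_def an_def by (rule sum_CS)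
    also have "\<dots> = L2_set (DG k zg) {d..<d+K} * an" by (simp add: L2_set_shift)
    also have "\<dots> \<le> CA * an" by (rule mult_right_mono[OF b1 an0])
    finally have q: "\<bar>Q k\<bar> \<le> CA * an" .
    show ?thesis using p q by linarith
  qed
  have BPQ2: "L2_set (\<lambda>k. P k + Q k) {..<K} \<le> sqrt (real K) * (CA / sqrt (real d) * a + CA * an)"
    using L2_set_le_const[of "{..<K}" "\<lambda>k. P k + Q k"] BPQ by simp
  have Ba: "sqrt (real d) * L2_set D\<alpha>' {..<K} \<le> sqrt (real d) * an + \<gamma> * (sqrt (real K) * (CA * a + CA * (sqrt (real d) * an)))"
  proof -
    have L1: "L2_set D\<alpha>' {..<K} \<le> an + L2_set (\<lambda>k. \<gamma> * (P k + Q k)) {..<K}"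
      unfolding D\<alpha>'_def an_def by (rule L2_set_triangle_ineq)
    have L2: "L2_set (\<lambda>k. \<gamma> * (P k + Q k)) {..<K} = \<gamma> * L2_set (\<lambda>k. P k + Q k) {..<K}"
      using \<gamma> by (simp add: L2_set_scale)
    have L3: "\<gamma> * L2_set (\<lambda>k. P k + Q k) {..<K} \<le> \<gamma> * (sqrt (real K) * (CA / sqrt (real d) * a + CA * an))"
      by (rule mult_left_mono[OF BPQ2]) (use \<gamma> in simp)
    have Lb: "L2_set D\<alpha>' {..<K} \<le> an + \<gamma> * (sqrt (real K) * (CA / sqrt (real d) * a + CA * an))"
      using L1 L2 L3 by linarith
    have "sqrt (real d) * L2_set D\<alpha>' {..<K} \<le> sqrt (real d) * (an + \<gamma> * (sqrt (real K) * (CA / sqrt (real d) * a + CA * an)))"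
      by (rule mult_left_mono[OF Lb less_imp_le[OF sd]])
    also have "\<dots> = sqrt (real d) * an + \<gamma> * (sqrt (real K) * (CA * a + CA * (sqrt (real d) * an)))"
      using sd by (simp add: field_simps)
    finally show ?thesis .
  qed
  have bound: "L2_set D\<theta>' {..<d} + sqrt (real d) * L2_set D\<alpha>' {..<K}
       \<le> (1 + \<gamma> * (\<bar>\<beta>\<bar> * C0^2 + (1 + sqrt (real K)) * \<bar>CA\<bar>)) * (L2_set D\<theta> {..<d} + sqrt (real d) * L2_set D\<alpha> {..<K})
         + \<gamma> * (if t = s0 then V else 0)"
  proof -
    have "0 \<le> sqrt (real d) * an" using an0 by simp
    from fin_ineq[where a=a and an=an and sd="sqrt (real d)" and sK="sqrt (real K)" and \<gamma>=\<gamma>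
        and B="\<bar>\<beta>\<bar> * C0^2" and CA=CA and Vt="if t = s0 then V else 0", OF less_imp_le[OF \<gamma>] _ this CA0]
    have "a + \<gamma> * (\<bar>\<beta>\<bar> * C0\<^sup>2 * a + CA * a + sqrt (real d) * (CA * an) + (if t = s0 then V else 0)) +
      (sqrt (real d) * an + \<gamma> * (sqrt (real K) * (CA * a + CA * (sqrt (real d) * an))))
      \<le> (1 + \<gamma> * (\<bar>\<beta>\<bar> * C0\<^sup>2 + (1 + sqrt (real K)) * \<bar>CA\<bar>)) * (a + sqrt (real d) * an) +
      \<gamma> * (if t = s0 then V else 0)" by simp
    then show ?thesis using Bt Ba unfolding a_def an_def by (simp add: mult.assoc)
  qed
  show ?thesis using dert dera bound by blast
qed

lemma iter:
  assumes A3: "A3 K CA s" and A4: "A4 K CA G" and \<gamma>: "\<gamma> > 0" and d: "d > 0"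
    and Xop: "opn {..<n} {..<d} X \<le> C0" and th0: "\<theta>0 \<in> dvec d" and al0: "\<alpha>0 \<in> dvec K"
    and V: "L2_set v {..<d} \<le> V"
    and L: "L = \<bar>\<beta>\<bar> * C0^2 + (1 + sqrt (real K)) * \<bar>CA\<bar>"
  shows "\<exists>D\<theta> D\<alpha>.
     (\<forall>l<d. ((\<lambda>\<epsilon>. fst (dyn K s G \<beta> \<gamma> d n X y \<theta>0 \<alpha>0 b v s0 \<epsilon> t) l) has_real_derivative D\<theta> l) (at 0)) \<and>
     (\<forall>k<K. ((\<lambda>\<epsilon>. snd (dyn K s G \<beta> \<gamma> d n X y \<theta>0 \<alpha>0 b v s0 \<epsilon> t) k) has_real_derivative D\<alpha> k) (at 0)) \<and>
     L2_set D\<theta> {..<d} + sqrt (real d) * L2_set D\<alpha> {..<K} \<le> (if s0 < t then \<gamma> * V * (1 + \<gamma> * L) ^ t else 0)"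
proof (induction t)
  case 0
  show ?case
    by (rule exI[of _ "\<lambda>_. 0"], rule exI[of _ "\<lambda>_. 0"]) (simp add: L2_set_def)
next
  case (Suc t)
  then obtain D\<theta> D\<alpha> where
    dt: "\<forall>l<d. ((\<lambda>\<epsilon>. fst (dyn K s G \<beta> \<gamma> d n X y \<theta>0 \<alpha>0 b v s0 \<epsilon> t) l) has_real_derivative D\<theta> l) (at 0)" and
    da: "\<forall>k<K. ((\<lambda>\<epsilon>. snd (dyn K s G \<beta> \<gamma> d n X y \<theta>0 \<alpha>0 b v s0 \<epsilon> t) k) has_real_derivative D\<alpha> k) (at 0)" and
    bd: "L2_set D\<theta> {..<d} + sqrt (real d) * L2_set D\<alpha> {..<K} \<le> (if s0 < t then \<gamma> * V * (1 + \<gamma> * L) ^ t else 0)"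
    by blast
  from step[OF A3 A4 \<gamma> d Xop th0 al0 V dt da]
  obtain D\<theta>' D\<alpha>' where
    dt': "\<forall>l<d. ((\<lambda>\<epsilon>. fst (dyn K s G \<beta> \<gamma> d n X y \<theta>0 \<alpha>0 b v s0 \<epsilon> (Suc t)) l) has_real_derivative D\<theta>' l) (at 0)" and
    da': "\<forall>k<K. ((\<lambda>\<epsilon>. snd (dyn K s G \<beta> \<gamma> d n X y \<theta>0 \<alpha>0 b v s0 \<epsilon> (Suc t)) k) has_real_derivative D\<alpha>' k) (at 0)" and
    bd': "L2_set D\<theta>' {..<d} + sqrt (real d) * L2_set D\<alpha>' {..<K}
       \<le> (1 + \<gamma> * L) * (L2_set D\<theta> {..<d} + sqrt (real d) * L2_set D\<alpha> {..<K}) + \<gamma> * (if t = s0 then V else 0)"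
    unfolding L by blast
  define e where "e = L2_set D\<theta> {..<d} + sqrt (real d) * L2_set D\<alpha> {..<K}"
  have L0: "L \<ge> 0" unfolding L by simp
  have q0: "1 + \<gamma> * L \<ge> 1" using L0 \<gamma> by simp
  have V0: "V \<ge> 0" using V L2_set_nonneg[of v "{..<d}"] by linarith
  have pw: "(1 + \<gamma> * L) ^ Suc t \<ge> 1" using q0 by (rule one_le_power)
  have "L2_set D\<theta>' {..<d} + sqrt (real d) * L2_set D\<alpha>' {..<K} \<le> (if s0 < Suc t then \<gamma> * V * (1 + \<gamma> * L) ^ Suc t else 0)"
  proof (cases "s0 < t")
    case True
    then have "e \<le> \<gamma> * V * (1 + \<gamma> * L) ^ t" "t \<noteq> s0" using bd by (auto simp: e_def)
    then have "(1 + \<gamma> * L) * e \<le> (1 + \<gamma> * L) * (\<gamma> * V * (1 + \<gamma> * L) ^ t)"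
      using q0 by (intro mult_left_mono) auto
    then show ?thesis using bd' True \<open>t \<noteq> s0\<close> by (simp add: e_def mult_ac)
  next
    case False
    then have e0: "e \<le> 0" using bd by (auto simp: e_def)
    have "(1 + \<gamma> * L) * e \<le> 0" using q0 e0 by (simp add: mult_nonneg_nonpos)
    show ?thesis
    proof (cases "t = s0")
      case True
      have "\<gamma> * V * 1 \<le> \<gamma> * V * (1 + \<gamma> * L) ^ Suc t"
        using pw \<gamma> V0 by (intro mult_left_mono) auto
      then show ?thesis using bd' True \<open>(1 + \<gamma> * L) * e \<le> 0\<close> by (simp add: e_def)
    next
      case f2: False
      then show ?thesis using bd' False \<open>(1 + \<gamma> * L) * e \<le> 0\<close> by (simp add: e_def)
    qed
  qed
  then show ?case using dt' da' by blast
qed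

lemma pow_exp_bound:
  fixes x T \<gamma> :: real
  assumes "x \<ge> 0" "\<gamma> > 0" "real t \<le> T / \<gamma>"
  shows "(1 + \<gamma> * x) ^ t \<le> exp (x * T)"
proof -
  have "(1 + \<gamma> * x) ^ t \<le> exp (\<gamma> * x) ^ t"
    using assms by (intro power_mono) (auto simp: exp_ge_add_one_self add_nonneg_nonneg)
  also have "\<dots> = exp (real t * (\<gamma> * x))" by (simp add: exp_of_nat_mult)
  also have "real t * (\<gamma> * x) \<le> x * T"
  proof -
    have "real t * \<gamma> \<le> T" using assms by (simp add: field_simps)
    then show ?thesis using assms(1) by (metis mult.assoc mult.commute mult_left_mono)
  qed
  then have "exp (real t * (\<gamma> * x)) \<le> exp (x * T)" by simp
  finally show ?thesis .
qed

lemma L2_unit: assumes "j < (d::nat)" shows "L2_set (\<lambda>l'. if l' = j then 1 else 0 :: real) {..<d} = 1"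
proof -
  have "(\<Sum>i<d. (if i = j then 1 else 0::real)\<^sup>2) = (\<Sum>i<d. if i = j then 1 else 0)"
    by (rule sum.cong) auto
  also have "\<dots> = 1" using assms by (subst sum.delta) auto
  finally show ?thesis unfolding L2_set_def by simp
qed

lemma L2_row:
  assumes "i < n" "opn {..<n} {..<d} X \<le> C0"
  shows "L2_set (\<lambda>l'. X i l') {..<d} \<le> C0"
proof -
  have "L2_set (\<lambda>l. \<Sum>i'\<in>{..<n}. X i' l * (if i' = i then 1 else 0)) {..<d}
      \<le> opn {..<n} {..<d} X * L2_set (\<lambda>i'. if i' = i then 1 else 0 :: real) {..<n}"
    by (rule opn_T) auto
  moreover have "(\<lambda>l. \<Sum>i'\<in>{..<n}. X i' l * (if i' = i then 1 else 0)) = (\<lambda>l. X i l)"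
    using assms(1) by (simp add: if_distrib[of "\<lambda>x. _ * x"] cong: if_cong)
  ultimately show ?thesis using L2_unit[OF assms(1)] assms(2) by simp
qed

lemma final_part:
  assumes A3: "A3 K CA s" and A4: "A4 K CA G" and \<gamma>: "\<gamma> > 0" and d: "d > 0"
    and Xop: "opn {..<n} {..<d} X \<le> C0" and th0: "\<theta>0 \<in> dvec d" and al0: "\<alpha>0 \<in> dvec K"
    and V: "L2_set v {..<d} \<le> 1 + C0" and C0: "C0 > 0"
    and st: "s0 \<le> t" and tT: "real t \<le> T / \<gamma>"
  shows "\<exists>D\<theta> D\<alpha>.
     (\<forall>l<d. ((\<lambda>\<epsilon>. fst (dyn K s G \<beta> \<gamma> d n X y \<theta>0 \<alpha>0 b v s0 \<epsilon> t) l) has_real_derivative D\<theta> l) (at 0)) \<and>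
     (\<forall>k<K. ((\<lambda>\<epsilon>. snd (dyn K s G \<beta> \<gamma> d n X y \<theta>0 \<alpha>0 b v s0 \<epsilon> t) k) has_real_derivative D\<alpha> k) (at 0)) \<and>
     L2_set D\<theta> {..<d} + sqrt (real d) * L2_set D\<alpha> {..<K}
       \<le> (1 + C0) * exp ((\<bar>\<beta>\<bar> * C0^2 + (1 + sqrt (real K)) * \<bar>CA\<bar>) * T) * \<gamma>"
proof -
  define L where "L = \<bar>\<beta>\<bar> * C0^2 + (1 + sqrt (real K)) * \<bar>CA\<bar>"
  have L0: "L \<ge> 0" unfolding L_def by simp
  obtain D\<theta> D\<alpha> where
    dt: "\<forall>l<d. ((\<lambda>\<epsilon>. fst (dyn K s G \<beta> \<gamma> d n X y \<theta>0 \<alpha>0 b v s0 \<epsilon> t) l) has_real_derivative D\<theta> l) (at 0)" and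
    da: "\<forall>k<K. ((\<lambda>\<epsilon>. snd (dyn K s G \<beta> \<gamma> d n X y \<theta>0 \<alpha>0 b v s0 \<epsilon> t) k) has_real_derivative D\<alpha> k) (at 0)" and
    bd: "L2_set D\<theta> {..<d} + sqrt (real d) * L2_set D\<alpha> {..<K} \<le> (if s0 < t then \<gamma> * (1 + C0) * (1 + \<gamma> * L) ^ t else 0)"
    using iter[OF A3 A4 \<gamma> d Xop th0 al0 V L_def] by blast
  have pe: "(1 + \<gamma> * L) ^ t \<le> exp (L * T)" by (rule pow_exp_bound[OF L0 \<gamma> tT])
  have C1: "0 \<le> (1 + C0) * exp (L * T) * \<gamma>" using C0 \<gamma> by simp
  have "(if s0 < t then \<gamma> * (1 + C0) * (1 + \<gamma> * L) ^ t else 0) \<le> (1 + C0) * exp (L * T) * \<gamma>"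
  proof (cases "s0 < t")
    case True
    have "\<gamma> * (1 + C0) * (1 + \<gamma> * L) ^ t \<le> \<gamma> * (1 + C0) * exp (L * T)"
      using pe C0 \<gamma> by (intro mult_left_mono) auto
    then show ?thesis using True by (simp add: mult_ac)
  next
    case False then show ?thesis using C1 by simp
  qed
  then have "L2_set D\<theta> {..<d} + sqrt (real d) * L2_set D\<alpha> {..<K} \<le> (1 + C0) * exp (L * T) * \<gamma>"
    using bd by linarith
  then show ?thesis using dt da unfolding L_def by blast
qed

theorem mainTheorem13:
  fixes T C0 \<beta> \<delta> CA :: real and K :: nat
  assumes "T > 0" and "C0 > 0"
  shows "\<exists>C>0. \<forall>s G. A3 K CA s \<longrightarrow> A4 K CA G \<longrightarrow>
    (\<forall>\<gamma>>0. \<forall>d n X y \<theta>0 \<alpha>0 b.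
       d > 0 \<longrightarrow> real n \<le> \<delta> * real d \<longrightarrow>
       opn {..<n} {..<d} X \<le> C0 \<longrightarrow>
       \<theta>0 \<in> dvec d \<longrightarrow> \<alpha>0 \<in> dvec K \<longrightarrow> (\<forall>j. b 0 j = 0) \<longrightarrow>
       (\<forall>s0 t j. s0 \<le> t \<longrightarrow> real t \<le> T / \<gamma> \<longrightarrow> j < d \<longrightarrow>
          (\<exists>D\<theta> D\<alpha>.
             (\<forall>l<d. ((\<lambda>\<epsilon>. fst (dyn K s G \<beta> \<gamma> d n X y \<theta>0 \<alpha>0 b (\<lambda>l'. if l' = j then 1 else 0) s0 \<epsilon> t) l)
                        has_real_derivative D\<theta> l) (at 0)) \<and>
             (\<forall>k<K. ((\<lambda>\<epsilon>. snd (dyn K s G \<beta> \<gamma> d n X y \<theta>0 \<alpha>0 b (\<lambda>l'. if l' = j then 1 else 0) s0 \<epsilon> t) k)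
                        has_real_derivative D\<alpha> k) (at 0)) \<and>
             L2_set D\<theta> {..<d} + sqrt (real d) * L2_set D\<alpha> {..<K} \<le> C * \<gamma>)) \<and>
       (\<forall>s0 t i. s0 \<le> t \<longrightarrow> real t \<le> T / \<gamma> \<longrightarrow> i < n \<longrightarrow>
          (\<exists>D\<theta> D\<alpha>.
             (\<forall>l<d. ((\<lambda>\<epsilon>. fst (dyn K s G \<beta> \<gamma> d n X y \<theta>0 \<alpha>0 b (\<lambda>l'. X i l') s0 \<epsilon> t) l)
                        has_real_derivative D\<theta> l) (at 0)) \<and>
             (\<forall>k<K. ((\<lambda>\<epsilon>. snd (dyn K s G \<beta> \<gamma> d n X y \<theta>0 \<alpha>0 b (\<lambda>l'. X i l') s0 \<epsilon> t) k)
                        has_real_derivative D\<alpha> k) (at 0)) \<and>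
             L2_set D\<theta> {..<d} + sqrt (real d) * L2_set D\<alpha> {..<K} \<le> C * \<gamma>)))"
proof -
  let ?C = "(1 + C0) * exp ((\<bar>\<beta>\<bar> * C0^2 + (1 + sqrt (real K)) * \<bar>CA\<bar>) * T)"
  have Cp: "?C > 0" using assms by simp
  show ?thesis
    apply (rule exI[of _ ?C])
    apply (intro conjI allI impI)
      apply (rule Cp)
  proof -
    fix s :: "real \<Rightarrow> (nat \<Rightarrow> real) \<Rightarrow> real" and G :: "(nat \<Rightarrow> real) \<Rightarrow> real measure \<Rightarrow> (nat \<Rightarrow> real)"
      and \<gamma> :: real and d n :: nat and X :: "nat \<Rightarrow> nat \<Rightarrow> real" and y \<theta>0 \<alpha>0 :: "nat \<Rightarrow> real"
      and b :: "nat \<Rightarrow> nat \<Rightarrow> real" and s0 t j :: nat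
    assume h: "A3 K CA s" "A4 K CA G" "0 < \<gamma>" "0 < d" "real n \<le> \<delta> * real d"
      "opn {..<n} {..<d} X \<le> C0" "\<theta>0 \<in> dvec d" "\<alpha>0 \<in> dvec K" "\<forall>j. b 0 j = 0"
      "s0 \<le> t" "real t \<le> T / \<gamma>" "j < d"
    have V: "L2_set (\<lambda>l'. if l' = j then 1 else 0 :: real) {..<d} \<le> 1 + C0"
      using L2_unit[OF h(12)] assms by simp
    show "\<exists>D\<theta> D\<alpha>.
             (\<forall>l<d. ((\<lambda>\<epsilon>. fst (dyn K s G \<beta> \<gamma> d n X y \<theta>0 \<alpha>0 b (\<lambda>l'. if l' = j then 1 else 0) s0 \<epsilon> t) l)
                        has_real_derivative D\<theta> l) (at 0)) \<and>
             (\<forall>k<K. ((\<lambda>\<epsilon>. snd (dyn K s G \<beta> \<gamma> d n X y \<theta>0 \<alpha>0 b (\<lambda>l'. if l' = j then 1 else 0) s0 \<epsilon> t) k)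
                        has_real_derivative D\<alpha> k) (at 0)) \<and>
             L2_set D\<theta> {..<d} + sqrt (real d) * L2_set D\<alpha> {..<K} \<le> ?C * \<gamma>"
      by (rule final_part[OF h(1,2,3,4,6,7,8) V assms(2) h(10,11)])
  next
    fix s :: "real \<Rightarrow> (nat \<Rightarrow> real) \<Rightarrow> real" and G :: "(nat \<Rightarrow> real) \<Rightarrow> real measure \<Rightarrow> (nat \<Rightarrow> real)"
      and \<gamma> :: real and d n :: nat and X :: "nat \<Rightarrow> nat \<Rightarrow> real" and y \<theta>0 \<alpha>0 :: "nat \<Rightarrow> real"
      and b :: "nat \<Rightarrow> nat \<Rightarrow> real" and s0 t i :: nat
    assume h: "A3 K CA s" "A4 K CA G" "0 < \<gamma>" "0 < d" "real n \<le> \<delta> * real d"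
      "opn {..<n} {..<d} X \<le> C0" "\<theta>0 \<in> dvec d" "\<alpha>0 \<in> dvec K" "\<forall>j. b 0 j = 0"
      "s0 \<le> t" "real t \<le> T / \<gamma>" "i < n"
    have V: "L2_set (\<lambda>l'. X i l') {..<d} \<le> 1 + C0"
      using L2_row[OF h(12) h(6)] by simp
    show "\<exists>D\<theta> D\<alpha>.
             (\<forall>l<d. ((\<lambda>\<epsilon>. fst (dyn K s G \<beta> \<gamma> d n X y \<theta>0 \<alpha>0 b (\<lambda>l'. X i l') s0 \<epsilon> t) l)
                        has_real_derivative D\<theta> l) (at 0)) \<and>
             (\<forall>k<K. ((\<lambda>\<epsilon>. snd (dyn K s G \<beta> \<gamma> d n X y \<theta>0 \<alpha>0 b (\<lambda>l'. X i l') s0 \<epsilon> t) k)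
                        has_real_derivative D\<alpha> k) (at 0)) \<and>
             L2_set D\<theta> {..<d} + sqrt (real d) * L2_set D\<alpha> {..<K} \<le> ?C * \<gamma>"
      by (rule final_part[OF h(1,2,3,4,6,7,8) V assms(2) h(10,11)])
  qed
qed

end
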